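(* Every real planar quadratic differential system having a finite semi-elemental double saddle-node $\overline{sn}_{(2)}$ and an infinite saddle-node of type $\overline{\binom{0}{2}}SN$ located at the point at infinity in the direction defined by the eigenvector of the saddle-node with non-null eigenvalue can be brought, via an affine change of coordinates and a time rescaling, to the normal form $$\dot x = x^2+2hxy,\qquad \dot y = y+\ell x^2+2mxy+2hy^2,$$ where $h,\ell,m$ are real parameters.
   Context: A singular point $r$ of a planar vector field $X$ is semi-elemental if $\det DX(r)=0$ but $\operatorname{tr} DX(r)\neq 0$. A finite double saddle-node $\overline{sn}_{(2)}$ is a semi-elemental finite singular point of multiplicity two whose neighborhood consists of two hyperbolic sectors and one parabolic sector. Infinite singular points are those of the Poincaré compactification on the line at infinity; e.g. in the chart $x=v/w$, $y=1/w$ the line at infinity is $w=0$ and the point at infinity in the direction of the $y$-axis is $(v,w)=(0,0)$. An infinite singular point is a saddle-node of type $\overline{\binom{0}{2}}SN$ if it is a semi-elemental saddle-node of multiplicity two on the line at infinity, formed by the collision of an infinite saddle with an infinite node, i.e. its eigendirection with zero eigenvalue is the line at infinity. *)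

theory Defs
  imports "HOL-Analysis.Analysis"
begin

definition poly2 :: "(nat \<Rightarrow> nat \<Rightarrow> real) \<Rightarrow> real \<Rightarrow> real \<Rightarrow> real" where
  "poly2 c x y = (\<Sum>i\<le>2. \<Sum>j\<le>2 - i. c i j * x ^ i * y ^ j)"

definition quadratic_system :: "(nat \<Rightarrow> nat \<Rightarrow> real) \<Rightarrow> (nat \<Rightarrow> nat \<Rightarrow> real) \<Rightarrow> bool" where
  "quadratic_system p q \<longleftrightarrow> (\<exists>i j. i + j = 2 \<and> (p i j \<noteq> 0 \<or> q i j \<noteq> 0))"

definition pdx :: "(real \<Rightarrow> real \<Rightarrow> real) \<Rightarrow> real \<Rightarrow> real \<Rightarrow> real" where
  "pdx F x y = deriv (\<lambda>t. F t y) x"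

definition pdy :: "(real \<Rightarrow> real \<Rightarrow> real) \<Rightarrow> real \<Rightarrow> real \<Rightarrow> real" where
  "pdy F x y = deriv (\<lambda>t. F x t) y"

definition jac_det :: "(real \<Rightarrow> real \<Rightarrow> real) \<Rightarrow> (real \<Rightarrow> real \<Rightarrow> real) \<Rightarrow> real \<Rightarrow> real \<Rightarrow> real" where
  "jac_det F G x y = pdx F x y * pdy G x y - pdy F x y * pdx G x y"

definition jac_tr :: "(real \<Rightarrow> real \<Rightarrow> real) \<Rightarrow> (real \<Rightarrow> real \<Rightarrow> real) \<Rightarrow> real \<Rightarrow> real \<Rightarrow> real" where
  "jac_tr F G x y = pdx F x y + pdy G x y"

definition semi_elemental :: "(real \<Rightarrow> real \<Rightarrow> real) \<Rightarrow> (real \<Rightarrow> real \<Rightarrow> real) \<Rightarrow> real \<Rightarrow> real \<Rightarrow> bool" where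
  "semi_elemental F G x y \<longleftrightarrow>
     F x y = 0 \<and> G x y = 0 \<and> jac_det F G x y = 0 \<and> jac_tr F G x y \<noteq> 0"

definition hess_form :: "(real \<Rightarrow> real \<Rightarrow> real) \<Rightarrow> real \<Rightarrow> real \<Rightarrow> real \<Rightarrow> real \<Rightarrow> real" where
  "hess_form F x y v1 v2 =
     pdx (pdx F) x y * v1 ^ 2 + 2 * pdy (pdx F) x y * v1 * v2 + pdy (pdy F) x y * v2 ^ 2"

text \<open>For a semi-elemental point with kernel vector v of DX and left kernel
  vector w of DX, the multiplicity (intersection multiplicity of F and G) is exactly
  two iff w . D^2X[v,v] \<noteq> 0; by Andronov's theorem a semi-elemental point of
  multiplicity two is a saddle-node (two hyperbolic sectors, one parabolic sector).\<close>
definition double_saddle_node :: "(real \<Rightarrow> real \<Rightarrow> real) \<Rightarrow> (real \<Rightarrow> real \<Rightarrow> real) \<Rightarrow> real \<Rightarrow> real \<Rightarrow> bool" where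
  "double_saddle_node F G x y \<longleftrightarrow> semi_elemental F G x y \<and>
     (\<exists>v1 v2 w1 w2. (v1, v2) \<noteq> (0, 0) \<and> (w1, w2) \<noteq> (0, 0) \<and>
        pdx F x y * v1 + pdy F x y * v2 = 0 \<and> pdx G x y * v1 + pdy G x y * v2 = 0 \<and>
        w1 * pdx F x y + w2 * pdx G x y = 0 \<and> w1 * pdy F x y + w2 * pdy G x y = 0 \<and>
        w1 * hess_form F x y v1 v2 + w2 * hess_form G x y v1 v2 \<noteq> 0)"

text \<open>(e1,e2) is an eigenvector of DX(x,y) for the non-null eigenvalue tr DX(x,y)
  (at a point with det DX = 0 the eigenvalues are 0 and tr DX).\<close>
definition nonnull_eigvec :: "(real \<Rightarrow> real \<Rightarrow> real) \<Rightarrow> (real \<Rightarrow> real \<Rightarrow> real) \<Rightarrow> real \<Rightarrow> real \<Rightarrow> real \<Rightarrow> real \<Rightarrow> bool" where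
  "nonnull_eigvec F G x y e1 e2 \<longleftrightarrow> (e1, e2) \<noteq> (0, 0) \<and>
     pdx F x y * e1 + pdy F x y * e2 = jac_tr F G x y * e1 \<and>
     pdx G x y * e1 + pdy G x y * e2 = jac_tr F G x y * e2"

text \<open>Poincare compactification, chart around the infinite point in direction e = (e1,e2):
  (x,y) = (v f + e) / w with f = (e2,-e1); the line at infinity is w = 0 and the
  infinite point in direction e is (v,w) = (0,0).  For e = (0,1) this is exactly the
  chart x = v/w, y = 1/w.  homog c e1 e2 v w = w^2 * c((v f + e)/w), as a polynomial.\<close>
definition homog :: "(nat \<Rightarrow> nat \<Rightarrow> real) \<Rightarrow> real \<Rightarrow> real \<Rightarrow> real \<Rightarrow> real \<Rightarrow> real" where
  "homog c e1 e2 v w =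
     (\<Sum>i\<le>2. \<Sum>j\<le>2 - i. c i j * (v * e2 + e1) ^ i * (e2 - v * e1) ^ j * w ^ (2 - i - j))"

text \<open>The compactified (polynomial, after multiplication by w^(n-1), n = 2) vector field
  in this chart: writing (x,y) = alpha f + beta e, v = alpha/beta, w = 1/beta.\<close>
definition inf_V :: "(nat \<Rightarrow> nat \<Rightarrow> real) \<Rightarrow> (nat \<Rightarrow> nat \<Rightarrow> real) \<Rightarrow> real \<Rightarrow> real \<Rightarrow> real \<Rightarrow> real \<Rightarrow> real" where
  "inf_V p q e1 e2 v w = (1 / (e1 ^ 2 + e2 ^ 2)) *
     ((e2 * homog p e1 e2 v w - e1 * homog q e1 e2 v w)
      - v * (e1 * homog p e1 e2 v w + e2 * homog q e1 e2 v w))"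

definition inf_W :: "(nat \<Rightarrow> nat \<Rightarrow> real) \<Rightarrow> (nat \<Rightarrow> nat \<Rightarrow> real) \<Rightarrow> real \<Rightarrow> real \<Rightarrow> real \<Rightarrow> real \<Rightarrow> real" where
  "inf_W p q e1 e2 v w = (1 / (e1 ^ 2 + e2 ^ 2)) *
     (- w * (e1 * homog p e1 e2 v w + e2 * homog q e1 e2 v w))"

text \<open>The infinite point in direction e is a saddle-node of type (0 2)SN: a semi-elemental
  saddle-node of multiplicity two of the compactified field whose zero-eigenvalue
  eigendirection is the line at infinity (w = 0), i.e. DY(0,0) (1,0) = 0.\<close>
definition inf_saddle_node_02 :: "(nat \<Rightarrow> nat \<Rightarrow> real) \<Rightarrow> (nat \<Rightarrow> nat \<Rightarrow> real) \<Rightarrow> real \<Rightarrow> real \<Rightarrow> bool" where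
  "inf_saddle_node_02 p q e1 e2 \<longleftrightarrow>
     double_saddle_node (inf_V p q e1 e2) (inf_W p q e1 e2) 0 0 \<and>
     pdx (inf_V p q e1 e2) 0 0 = 0 \<and> pdx (inf_W p q e1 e2) 0 0 = 0"

end

theory Submission
  imports Defs
begin

lemma poly2_eq: "poly2 c x y = c 0 0 + c 0 1 * y + c 0 2 * y^2 + c 1 0 * x + c 1 1 * x * y + c 2 0 * x^2"
  unfolding poly2_def by (simp add: numeral_2_eq_2 atMost_Suc algebra_simps)
lemma homog0: "homog c e1 e2 t 0 = c 2 0 * (t*e2+e1)^2 + c 1 1 * (t*e2+e1)*(e2-t*e1) + c 0 2 * (e2-t*e1)^2"
  unfolding homog_def by (simp add: numeral_2_eq_2 atMost_Suc algebra_simps)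
lemma pdx_poly2: "pdx (poly2 c) x y = c 1 0 + c 1 1 * y + 2 * c 2 0 * x"
proof -
  have "((\<lambda>t. poly2 c t y) has_real_derivative (c 1 0 + c 1 1 * y + 2 * c 2 0 * x)) (at x)"
    unfolding poly2_eq by (auto intro!: derivative_eq_intros simp: algebra_simps)
  then show ?thesis unfolding pdx_def by (rule DERIV_imp_deriv)
qed
lemma pdy_poly2: "pdy (poly2 c) x y = c 0 1 + c 1 1 * x + 2 * c 0 2 * y"
proof -
  have "((\<lambda>t. poly2 c x t) has_real_derivative (c 0 1 + c 1 1 * x + 2 * c 0 2 * y)) (at y)"
    unfolding poly2_eq by (auto intro!: derivative_eq_intros simp: algebra_simps)
  then show ?thesis unfolding pdy_def by (rule DERIV_imp_deriv)
qed
lemma pdx_lin: "pdx (\<lambda>x y. a + b * y + k * x) x y = k"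
  unfolding pdx_def by (rule DERIV_imp_deriv) (auto intro!: derivative_eq_intros)
lemma pdy_lin: "pdy (\<lambda>x y. a + b * x + k * y) x y = k"
  unfolding pdy_def by (rule DERIV_imp_deriv) (auto intro!: derivative_eq_intros)
lemma pdx_lin2: "pdx (\<lambda>x y. a + b * x + k * y) x y = b"
  unfolding pdx_def by (rule DERIV_imp_deriv) (auto intro!: derivative_eq_intros)
lemma hess_poly2: "hess_form (poly2 c) x y v1 v2 = 2 * (c 2 0 * v1^2 + c 1 1 * v1 * v2 + c 0 2 * v2^2)"
proof -
  have 1: "pdx (poly2 c) = (\<lambda>x y. c 1 0 + c 1 1 * y + 2 * c 2 0 * x)" by (intro ext) (rule pdx_poly2)
  have 2: "pdy (poly2 c) = (\<lambda>x y. c 0 1 + c 1 1 * x + 2 * c 0 2 * y)" by (intro ext) (rule pdy_poly2)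
  have 3: "pdy (pdx (poly2 c)) x y = c 1 1"
    unfolding 1 pdy_def by (rule DERIV_imp_deriv) (auto intro!: derivative_eq_intros)
  show ?thesis unfolding hess_form_def 3 unfolding 1 2 pdx_lin pdy_lin by (simp add: algebra_simps)
qed

lemma infV0: "inf_V p q e1 e2 0 0 = (1/(e1^2+e2^2)) * (e2 * (p 2 0 * e1^2 + p 1 1 * e1*e2 + p 0 2 * e2^2) - e1 * (q 2 0 * e1^2 + q 1 1 * e1*e2 + q 0 2 * e2^2))"
  unfolding inf_V_def homog0 by (simp add: algebra_simps power2_eq_square)
lemma infVd: "pdx (inf_V p q e1 e2) 0 0 = (1/(e1^2+e2^2)) *
   (e2 * (2 * p 2 0 * e1 * e2 + p 1 1 * (e2*e2 - e1*e1) - 2 * p 0 2 * e2 * e1)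
  - e1 * (2 * q 2 0 * e1 * e2 + q 1 1 * (e2*e2 - e1*e1) - 2 * q 0 2 * e2 * e1)
  - (e1 * (p 2 0 * e1^2 + p 1 1 * e1*e2 + p 0 2 * e2^2) + e2 * (q 2 0 * e1^2 + q 1 1 * e1*e2 + q 0 2 * e2^2)))"
proof -
  define K where "K = 1/(e1^2+e2^2)"
  have e: "(\<lambda>t. inf_V p q e1 e2 t 0) = (\<lambda>t. K * ((e2 * homog p e1 e2 t 0 - e1 * homog q e1 e2 t 0)
      - t * (e1 * homog p e1 e2 t 0 + e2 * homog q e1 e2 t 0)))"
    unfolding inf_V_def K_def by simp
  have "((\<lambda>t. inf_V p q e1 e2 t 0) has_real_derivative K *
   (e2 * (2 * p 2 0 * e1 * e2 + p 1 1 * (e2*e2 - e1*e1) - 2 * p 0 2 * e2 * e1)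
  - e1 * (2 * q 2 0 * e1 * e2 + q 1 1 * (e2*e2 - e1*e1) - 2 * q 0 2 * e2 * e1)
  - (e1 * (p 2 0 * e1^2 + p 1 1 * e1*e2 + p 0 2 * e2^2) + e2 * (q 2 0 * e1^2 + q 1 1 * e1*e2 + q 0 2 * e2^2)))) (at 0)"
    unfolding e homog0
    by (rule derivative_eq_intros refl | simp)+ (simp add: algebra_simps power2_eq_square)
  then show ?thesis unfolding pdx_def K_def by (rule DERIV_imp_deriv)
qed


lemma cramer:
  fixes v1 v2 e1 e2 z1 z2 :: real
  assumes "v1*e2 - v2*e1 \<noteq> 0"
  shows "z1 = ((z1*e2 - z2*e1)/(v1*e2 - v2*e1)) * v1 + ((v1*z2 - v2*z1)/(v1*e2 - v2*e1)) * e1"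
    and "z2 = ((z1*e2 - z2*e1)/(v1*e2 - v2*e1)) * v2 + ((v1*z2 - v2*z1)/(v1*e2 - v2*e1)) * e2"
proof -
  have "z1 * (v1*e2 - v2*e1) = (z1*e2 - z2*e1) * v1 + (v1*z2 - v2*z1) * e1" by algebra
  then show "z1 = ((z1*e2 - z2*e1)/(v1*e2 - v2*e1)) * v1 + ((v1*z2 - v2*z1)/(v1*e2 - v2*e1)) * e1"
    using assms by (simp add: add_divide_distrib[symmetric] eq_divide_eq)
  have "z2 * (v1*e2 - v2*e1) = (z1*e2 - z2*e1) * v2 + (v1*z2 - v2*z1) * e2" by algebra
  then show "z2 = ((z1*e2 - z2*e1)/(v1*e2 - v2*e1)) * v2 + ((v1*z2 - v2*z1)/(v1*e2 - v2*e1)) * e2"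
    using assms by (simp add: add_divide_distrib[symmetric] eq_divide_eq)
qed

theorem proposition2p3:
  fixes p q :: "nat \<Rightarrow> nat \<Rightarrow> real" and x0 y0 e1 e2 :: real
  assumes "quadratic_system p q"
    and "double_saddle_node (poly2 p) (poly2 q) x0 y0"
    and "nonnull_eigvec (poly2 p) (poly2 q) x0 y0 e1 e2"
    and "inf_saddle_node_02 p q e1 e2"
  shows "\<exists>a11 a12 a21 a22 b1 b2 c h l m :: real.
           a11 * a22 - a12 * a21 \<noteq> 0 \<and> c \<noteq> 0 \<and>
           (\<forall>u1 u2.
              poly2 p (a11 * u1 + a12 * u2 + b1) (a21 * u1 + a22 * u2 + b2)
                = c * (a11 * (u1 ^ 2 + 2 * h * u1 * u2)
                       + a12 * (u2 + l * u1 ^ 2 + 2 * m * u1 * u2 + 2 * h * u2 ^ 2)) \<and>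
              poly2 q (a11 * u1 + a12 * u2 + b1) (a21 * u1 + a22 * u2 + b2)
                = c * (a21 * (u1 ^ 2 + 2 * h * u1 * u2)
                       + a22 * (u2 + l * u1 ^ 2 + 2 * m * u1 * u2 + 2 * h * u2 ^ 2)))"
proof -
  define a where "a = p 1 0 + p 1 1 * y0 + 2 * p 2 0 * x0"
  define b where "b = p 0 1 + p 1 1 * x0 + 2 * p 0 2 * y0"
  define c where "c = q 1 0 + q 1 1 * y0 + 2 * q 2 0 * x0"
  define d where "d = q 0 1 + q 1 1 * x0 + 2 * q 0 2 * y0"
  define lam where "lam = a + d"
  define F1 where "F1 = (\<lambda>z1 z2::real. p 2 0 * z1^2 + p 1 1 * z1*z2 + p 0 2 * z2^2)"
  define F2 where "F2 = (\<lambda>z1 z2::real. q 2 0 * z1^2 + q 1 1 * z1*z2 + q 0 2 * z2^2)"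
  define B1 where "B1 = (\<lambda>z1 z2 w1 w2::real. 2 * p 2 0 * z1 * w1 + p 1 1 * (z1*w2 + z2*w1) + 2 * p 0 2 * z2 * w2)"
  define B2 where "B2 = (\<lambda>z1 z2 w1 w2::real. 2 * q 2 0 * z1 * w1 + q 1 1 * (z1*w2 + z2*w1) + 2 * q 0 2 * z2 * w2)"
  define n where "n = e1^2 + e2^2"
  have P0: "poly2 p x0 y0 = 0" and Q0: "poly2 q x0 y0 = 0" and lamnz: "lam \<noteq> 0"
    using assms(2) unfolding double_saddle_node_def semi_elemental_def jac_tr_def pdx_poly2 pdy_poly2
    by (auto simp: lam_def a_def d_def)
  have "\<exists>v1 v2 w1 w2. (v1, v2) \<noteq> (0::real, 0::real) \<and> (w1, w2) \<noteq> (0::real, 0::real) \<and>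
    a * v1 + b * v2 = 0 \<and> c * v1 + d * v2 = 0 \<and>
    w1 * a + w2 * c = 0 \<and> w1 * b + w2 * d = 0 \<and>
    w1 * (2 * F1 v1 v2) + w2 * (2 * F2 v1 v2) \<noteq> 0"
    using assms(2) unfolding double_saddle_node_def hess_poly2 pdx_poly2 pdy_poly2
      a_def b_def c_def d_def F1_def F2_def by blast
  then obtain v1 v2 w1 w2 where v0: "(v1, v2) \<noteq> (0::real, 0::real)"
    and Jv1: "a * v1 + b * v2 = 0" and Jv2: "c * v1 + d * v2 = 0"
    and wJ1: "w1 * a + w2 * c = 0" and wJ2: "w1 * b + w2 * d = 0"
    and hs: "w1 * (2 * F1 v1 v2) + w2 * (2 * F2 v1 v2) \<noteq> 0"
    by blast
  have e0: "(e1, e2) \<noteq> (0, 0)" and Je1: "a * e1 + b * e2 = lam * e1" and Je2: "c * e1 + d * e2 = lam * e2"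
    using assms(3) unfolding nonnull_eigvec_def jac_tr_def pdx_poly2 pdy_poly2
    by (auto simp: a_def b_def c_def d_def lam_def)
  have npos: "n > 0" using e0 unfolding n_def
    by (auto simp: sum_power2_gt_zero_iff)
  have I1: "e2 * F1 e1 e2 - e1 * F2 e1 e2 = 0"
  proof -
    have "inf_V p q e1 e2 0 0 = 0" using assms(4)
      unfolding inf_saddle_node_02_def double_saddle_node_def semi_elemental_def by simp
    then show ?thesis using npos unfolding infV0
      by (auto simp: F1_def F2_def n_def)
  qed
  have I2: "e2 * B1 e2 (-e1) e1 e2 - e1 * B2 e2 (-e1) e1 e2 - (e1 * F1 e1 e2 + e2 * F2 e1 e2) = 0"
  proof -
    have "pdx (inf_V p q e1 e2) 0 0 = 0" using assms(4) unfolding inf_saddle_node_02_def by simp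
    then have "(e2 * (2 * p 2 0 * e1 * e2 + p 1 1 * (e2*e2 - e1*e1) - 2 * p 0 2 * e2 * e1)
  - e1 * (2 * q 2 0 * e1 * e2 + q 1 1 * (e2*e2 - e1*e1) - 2 * q 0 2 * e2 * e1)
  - (e1 * (p 2 0 * e1^2 + p 1 1 * e1*e2 + p 0 2 * e2^2) + e2 * (q 2 0 * e1^2 + q 1 1 * e1*e2 + q 0 2 * e2^2))) = 0"
      using npos unfolding infVd mult_eq_0_iff n_def by auto
    then show ?thesis
      by (simp add: F1_def F2_def B1_def B2_def algebra_simps)
  qed
  define D where "D = v1*e2 - v2*e1"
  have Dnz: "D \<noteq> 0"
  proof
    assume D0: "D = 0"
    define t where "t = (v1*e1+v2*e2)/n"
    have "n* v1 = e1*(v1*e1+v2*e2) + e2*D" unfolding n_def D_def by algebra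
    then have tv1: "v1 = t*e1" using D0 npos unfolding t_def by (simp add: field_simps)
    have "n* v2 = e2*(v1*e1+v2*e2) - e1*D" unfolding n_def D_def by algebra
    then have tv2: "v2 = t*e2" using D0 npos unfolding t_def by (simp add: field_simps)
    have "a * v1 + b * v2 = t * (a*e1 + b*e2)" "c * v1 + d * v2 = t * (c*e1 + d*e2)"
      unfolding tv1 tv2 by algebra+
    then have "t*(lam*e1) = 0" "t*(lam*e2) = 0" using Jv1 Jv2 Je1 Je2 by auto
    then have "t*e1 = 0" "t*e2 = 0" using lamnz by auto
    then show False using v0 tv1 tv2 by auto
  qed
  define kap where "kap = (e1 * F1 e1 e2 + e2 * F2 e1 e2)/n"
  have "n * F1 e1 e2 = e1*(e1 * F1 e1 e2 + e2 * F2 e1 e2) + e2*(e2 * F1 e1 e2 - e1 * F2 e1 e2)"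
    unfolding n_def by algebra
  then have Fe1: "F1 e1 e2 = kap * e1" using I1 npos unfolding kap_def by (simp add: field_simps)
  have "n * F2 e1 e2 = e2*(e1 * F1 e1 e2 + e2 * F2 e1 e2) - e1*(e2 * F1 e1 e2 - e1 * F2 e1 e2)"
    unfolding n_def by algebra
  then have Fe2: "F2 e1 e2 = kap * e2" using I1 npos unfolding kap_def by (simp add: field_simps)
  define al where "al = (F1 v1 v2 * e2 - F2 v1 v2 * e1)/D"
  define rho where "rho = (v1 * F2 v1 v2 - v2 * F1 v1 v2)/D"
  have Fv1: "F1 v1 v2 = al * v1 + rho * e1" and Fv2: "F2 v1 v2 = al * v2 + rho * e2"
    using cramer[where ?z1.0="F1 v1 v2" and ?z2.0="F2 v1 v2" and ?v1.0=v1 and ?v2.0=v2 and ?e1.0=e1 and ?e2.0=e2] Dnz unfolding al_def rho_def D_def by auto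
  define Bv1 where "Bv1 = B1 v1 v2 e1 e2"
  define Bv2 where "Bv2 = B2 v1 v2 e1 e2"
  have idB: "n*(e2*Bv1 - e1*Bv2) = D*(e2 * B1 e2 (-e1) e1 e2 - e1 * B2 e2 (-e1) e1 e2)
     + (v1*e1+v2*e2)*2*(e2 * F1 e1 e2 - e1 * F2 e1 e2)"
    unfolding n_def D_def Bv1_def Bv2_def B1_def B2_def F1_def F2_def by algebra
  have vcomp: "Bv1*e2 - Bv2*e1 = kap*D"
  proof -
    have "n*(e2*Bv1 - e1*Bv2) = D*(kap*n)" using idB I1 I2 npos unfolding kap_def by simp
    then have "n*(Bv1*e2 - Bv2*e1) = n*(kap*D)" by (simp add: algebra_simps)
    then show ?thesis using npos by simp
  qed
  define mu where "mu = (v1 * Bv2 - v2 * Bv1)/D"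
  have Bv1e: "Bv1 = kap * v1 + mu * e1" and Bv2e: "Bv2 = kap * v2 + mu * e2"
    using cramer[where ?z1.0=Bv1 and ?z2.0=Bv2 and ?v1.0=v1 and ?v2.0=v2 and ?e1.0=e1 and ?e2.0=e2] Dnz vcomp unfolding mu_def D_def by auto
  have we: "w1*e1 + w2*e2 = 0"
  proof -
    have "lam*(w1*e1 + w2*e2) = w1*(lam*e1) + w2*(lam*e2)" by algebra
    also have "\<dots> = w1*(a*e1+b*e2) + w2*(c*e1+d*e2)" unfolding Je1 Je2 ..
    also have "\<dots> = e1*(w1*a + w2*c) + e2*(w1*b + w2*d)" by algebra
    finally have "lam*(w1*e1 + w2*e2) = e1*(w1*a + w2*c) + e2*(w1*b + w2*d)" .
    then show ?thesis using wJ1 wJ2 lamnz by simp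
  qed
  have alnz: "al \<noteq> 0"
  proof
    assume "al = 0"
    then have "w1 * (2 * F1 v1 v2) + w2 * (2 * F2 v1 v2) = 2*rho*(w1*e1+w2*e2)"
      unfolding Fv1 Fv2 by algebra
    then show False using hs we by simp
  qed
  define s where "s = lam/al"
  have sal: "s*al = lam" using alnz unfolding s_def by simp
  have snz: "s \<noteq> 0" using alnz lamnz unfolding s_def by simp
  define hh where "hh = kap/(2*lam)"
  define ll where "ll = s^2*rho/lam"
  define mm where "mm = s*mu/(2*lam)"
  have hh: "lam*(2*hh) = kap" and ll: "lam*ll = s^2*rho" and mm: "lam*(2*mm) = s*mu"
    using lamnz unfolding hh_def ll_def mm_def by auto
  show ?thesis
  proof (intro exI conjI allI)
    show "s* v1 * e2 - e1 * (s* v2) \<noteq> 0" using Dnz snz unfolding D_def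
      by (metis mult.assoc mult.commute mult_eq_0_iff right_diff_distrib)
    show "lam \<noteq> 0" by (rule lamnz)
  next
    fix u1 u2 :: real
    have TP: "poly2 p (s* v1*u1 + e1*u2 + x0) (s* v2*u1 + e2*u2 + y0) = poly2 p x0 y0
       + s*u1*(a* v1 + b* v2) + u2*(a*e1+b*e2) + s^2*u1^2*F1 v1 v2 + s*u1*u2*Bv1 + u2^2*F1 e1 e2"
      unfolding poly2_eq a_def b_def F1_def Bv1_def B1_def by algebra
    have TQ: "poly2 q (s* v1*u1 + e1*u2 + x0) (s* v2*u1 + e2*u2 + y0) = poly2 q x0 y0
       + s*u1*(c* v1 + d* v2) + u2*(c*e1+d*e2) + s^2*u1^2*F2 v1 v2 + s*u1*u2*Bv2 + u2^2*F2 e1 e2"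
      unfolding poly2_eq c_def d_def F2_def Bv2_def B2_def by algebra
    show "poly2 p (s* v1*u1 + e1*u2 + x0) (s* v2*u1 + e2*u2 + y0) =
      lam * (s* v1 * (u1 ^ 2 + 2 * hh * u1 * u2) + e1 * (u2 + ll * u1 ^ 2
         + 2 * mm * u1 * u2 + 2 * hh * u2 ^ 2))"
      (is "?L = ?R")
    proof -
      have "?L = u2*lam*e1 + u1^2* v1 * s * (s*al) + u1^2*e1*(s^2*rho) + u1*u2* v1 * s * kap + u1*u2*e1*(s*mu) + u2^2*e1*kap"
        unfolding TP P0 Jv1 Je1 Fv1 Bv1e Fe1 by algebra
      also have "\<dots> = ?R" unfolding sal ll[symmetric] mm[symmetric] hh[symmetric] by algebra
      finally show ?thesis .
    qed
    show "poly2 q (s* v1*u1 + e1*u2 + x0) (s* v2*u1 + e2*u2 + y0) =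
      lam * (s* v2 * (u1 ^ 2 + 2 * hh * u1 * u2) + e2 * (u2 + ll * u1 ^ 2
         + 2 * mm * u1 * u2 + 2 * hh * u2 ^ 2))"
      (is "?L = ?R")
    proof -
      have "?L = u2*lam*e2 + u1^2* v2 * s * (s*al) + u1^2*e2*(s^2*rho) + u1*u2* v2 * s * kap + u1*u2*e2*(s*mu) + u2^2*e2*kap"
        unfolding TQ Q0 Jv2 Je2 Fv2 Bv2e Fe2 by algebra
      also have "\<dots> = ?R" unfolding sal ll[symmetric] mm[symmetric] hh[symmetric] by algebra
      finally show ?thesis .
    qed
  qed
qed
end
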